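(* Let $f=f(n)>0$ and suppose $f\in O(1/n)$. Then $$O\left(\frac{n^8f^2+n^2}{n^{15}f^7+n^3f^3}+\frac{n^{13}f^3+n^4}{n^{23}f^9+n^2f^2}+\sum_{k=3}^{n-1}\frac{k^3n^{12}(n-k)^3f^3+k^9n^6}{n^{16}(n-k)^9f^9+k^{16}(n-k)f}\right)\le O\left(\frac{\ln(n)}{nf}+\frac1{n^4f^4}\right).$$ Moreover, if $f\in o(1/n^3)$, then the left-hand side is $O\left(\frac1{nf^3}\right)$.
   Context: Asymptotic notation refers to $n\to\infty$. *)

theory Defs
  imports "HOL-Analysis.Analysis" "HOL-Library.Landau_Symbols"
begin

definition lhs17 :: "(nat \<Rightarrow> real) \<Rightarrow> nat \<Rightarrow> real" where
  "lhs17 f n =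
     (real n ^ 8 * f n ^ 2 + real n ^ 2) / (real n ^ 15 * f n ^ 7 + real n ^ 3 * f n ^ 3)
   + (real n ^ 13 * f n ^ 3 + real n ^ 4) / (real n ^ 23 * f n ^ 9 + real n ^ 2 * f n ^ 2)
   + (\<Sum>k = 3..n - 1.
        (real k ^ 3 * real n ^ 12 * (real n - real k) ^ 3 * f n ^ 3 + real k ^ 9 * real n ^ 6)
      / (real n ^ 16 * (real n - real k) ^ 9 * f n ^ 9 + real k ^ 16 * (real n - real k) * f n))"

end

theory Submission
  imports Defs
begin


lemma frac_split:
  fixes A B D1 D2 :: real
  assumes "A \<ge> 0" "B \<ge> 0" "D1 > 0" "D2 > 0"
  shows "(A+B)/(D1+D2) \<le> A/D1 + B/D1" "(A+B)/(D1+D2) \<le> A/D2 + B/D2"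
proof -
  have "A/(D1+D2) \<le> A/D1" "B/(D1+D2) \<le> B/D1" "A/(D1+D2) \<le> A/D2" "B/(D1+D2) \<le> B/D2"
    using assms by (auto intro!: divide_left_mono)
  then show "(A+B)/(D1+D2) \<le> A/D1 + B/D1" "(A+B)/(D1+D2) \<le> A/D2 + B/D2"
    by (auto simp: add_divide_distrib)
qed

lemma harm_le: "n \<ge> 1 \<Longrightarrow> (\<Sum>j=1..n. 1 / real j) \<le> 1 + ln (real n)"
proof (induction n rule: dec_induct)
  case base then show ?case by simp
next
  case (step n)
  have "ln (real n / (real n + 1)) \<le> real n / (real n + 1) - 1"
    using step by (intro ln_le_minus_one) auto
  also have "\<dots> = - 1 / (real n + 1)" using step by (simp add: field_simps)
  finally have "1 / (real n + 1) \<le> ln (real n + 1) - ln (real n)"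
    using step by (simp add: ln_div)
  then show ?case using step by (simp add: add.commute)
qed

lemma tele: "a \<ge> 1 \<Longrightarrow> (\<Sum>k\<in>{a..<a+d}. 1 / real k ^ 2) \<le> 2 / real a - 2 / real (a+d)"
proof (induction d)
  case 0 then show ?case by simp
next
  case (Suc d)
  have t: "\<And>t::real. t \<ge> 1 \<Longrightarrow> 1 / t ^ 2 \<le> 2 / t - 2 / (t+1)"
  proof -
    fix t :: real assume t: "t \<ge> 1"
    have "2 / t - 2 / (t+1) = 2 / (t*(t+1))" using t by (simp add: field_simps)
    also have "1 / t^2 \<le> 2 / (t*(t+1))" using t
      by (simp add: divide_simps power2_eq_square)
    finally show "1 / t ^ 2 \<le> 2 / t - 2 / (t+1)" by simp
  qed
  have "1 / real (a+d) ^ 2 \<le> 2 / real (a+d) - 2 / real (a + Suc d)"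
    using t[of "real (a+d)"] Suc.prems by (simp add: add.commute add.left_commute)
  then show ?case using Suc by simp
qed

lemma tail: "a \<ge> 1 \<Longrightarrow> (\<Sum>k\<in>{a..N}. 1 / real k ^ 2) \<le> 2 / real a"
proof (cases "a \<le> N")
  case True
  assume a: "a \<ge> 1"
  have "{a..N} = {a..<a + (Suc N - a)}" using True by auto
  moreover have "2 / real (a + (Suc N - a)) \<ge> 0" by simp
  ultimately show ?thesis using tele[OF a, of "Suc N - a"] by (metis diff_ge_0_iff_ge diff_le_eq le_add_same_cancel1 order_trans)
next
  case False then show ?thesis by simp
qed



lemma sA:
  fixes k n m x :: real
  assumes k: "k \<ge> 1" and m: "m \<ge> 1" and h: "2*k \<le> n" and nm: "m = n - k" and x: "x > 0"
  shows "(k^3 * n^12 * m^3 * x^3 + k^9 * n^6) / (n^16 * m^9 * x^9 + k^16 * m * x)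
         \<le> 64 * k^3 / (n^10 * x^6) + 512 * k^9 / (n^19 * x^9)"
proof -
  have n: "n > 0" using k h by linarith
  have nm2: "n \<le> 2*m" using h nm by linarith
  have e1: "k^3 * n^12 * m^3 * x^3 / (n^16 * m^9 * x^9) = k^3 / (n^4 * x^6) * (1 / m^6)"
    using n m x by (simp add: field_simps; algebra?)
  have e2: "k^9 * n^6 / (n^16 * m^9 * x^9) = k^9 / (n^10 * x^9) * (1 / m^9)"
    using n m x by (simp add: field_simps; algebra?)
  have p6: "1 / m^6 \<le> 64 / n^6"
  proof -
    have "n^6 \<le> (2*m)^6" using nm2 n by (intro power_mono) auto
    then show ?thesis using n m by (simp add: field_simps; algebra?)
  qed
  have p9: "1 / m^9 \<le> 512 / n^9"
  proof -
    have "n^9 \<le> (2*m)^9" using nm2 n by (intro power_mono) auto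
    then show ?thesis using n m by (simp add: field_simps; algebra?)
  qed
  have "(k^3 * n^12 * m^3 * x^3 + k^9 * n^6) / (n^16 * m^9 * x^9 + k^16 * m * x)
     \<le> k^3 * n^12 * m^3 * x^3 / (n^16 * m^9 * x^9) + k^9 * n^6 / (n^16 * m^9 * x^9)"
    using k m n x by (intro frac_split) auto
  also have "\<dots> \<le> k^3 / (n^4 * x^6) * (64 / n^6) + k^9 / (n^10 * x^9) * (512 / n^9)"
    unfolding e1 e2 using k n x p6 p9 by (intro add_mono mult_left_mono) auto
  also have "\<dots> = 64 * k^3 / (n^10 * x^6) + 512 * k^9 / (n^19 * x^9)"
    using n x by (simp add: field_simps; algebra?)
  finally show ?thesis .
qed

lemma sB:
  fixes k n m x :: real
  assumes k: "k \<ge> 1" and m: "m \<ge> 1" and h: "2*k \<le> n" and nm: "m = n - k" and x: "x > 0"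
  shows "(k^3 * n^12 * m^3 * x^3 + k^9 * n^6) / (n^16 * m^9 * x^9 + k^16 * m * x)
         \<le> n^14 * x^2 / k^13 + 2 * n^5 / (k^7 * x)"
proof -
  have n: "n > 0" using k h by linarith
  have nm2: "n \<le> 2*m" "m \<le> n" using h nm k by linarith+
  have e1: "k^3 * n^12 * m^3 * x^3 / (k^16 * m * x) = n^12 * x^2 / k^13 * m^2"
    using n m x k by (simp add: field_simps; algebra)
  have e2: "k^9 * n^6 / (k^16 * m * x) = n^6 / (k^7 * x) * (1 / m)"
    using n m x k by (simp add: field_simps; algebra?)
  have p2: "m^2 \<le> n^2" using nm2 m by (intro power_mono) auto
  have p1: "1 / m \<le> 2 / n" using nm2 n m by (simp add: field_simps; algebra?)
  have "(k^3 * n^12 * m^3 * x^3 + k^9 * n^6) / (n^16 * m^9 * x^9 + k^16 * m * x)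
     \<le> k^3 * n^12 * m^3 * x^3 / (k^16 * m * x) + k^9 * n^6 / (k^16 * m * x)"
    using k m n x by (intro frac_split) auto
  also have "\<dots> \<le> n^12 * x^2 / k^13 * n^2 + n^6 / (k^7 * x) * (2 / n)"
    unfolding e1 e2 using k n x p1 p2 by (intro add_mono mult_left_mono) auto
  also have "\<dots> = n^14 * x^2 / k^13 + 2 * n^5 / (k^7 * x)"
    using n x k by (simp add: field_simps; algebra?)
  finally show ?thesis .
qed

lemma sC:
  fixes k n m x :: real
  assumes k: "k \<ge> 1" and m: "m \<ge> 1" and h: "2*k > n" and nm: "m = n - k" and x: "x > 0"
  shows "(k^3 * n^12 * m^3 * x^3 + k^9 * n^6) / (n^16 * m^9 * x^9 + k^16 * m * x)
         \<le> 8192 * n * x^2 + 128 / (n * m * x)"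
proof -
  have n: "n > 0" using k m nm by linarith
  have nm2: "n \<le> 2*k" "m \<le> n" using h nm k by linarith+
  have e1: "k^3 * n^12 * m^3 * x^3 / (k^16 * m * x) = n^12 * x^2 * m^2 * (1 / k^13)"
    using n m x k by (simp add: field_simps; algebra)
  have e2: "k^9 * n^6 / (k^16 * m * x) = n^6 / (m * x) * (1 / k^7)"
    using n m x k by (simp add: field_simps; algebra?)
  have p2: "m^2 \<le> n^2" using nm2 m by (intro power_mono) auto
  have p13: "1 / k^13 \<le> 8192 / n^13"
  proof -
    have "n^13 \<le> (2*k)^13" using nm2 n by (intro power_mono) auto
    then show ?thesis using n k by (simp add: field_simps; algebra?)
  qed
  have p7: "1 / k^7 \<le> 128 / n^7"
  proof -
    have "n^7 \<le> (2*k)^7" using nm2 n by (intro power_mono) auto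
    then show ?thesis using n k by (simp add: field_simps; algebra?)
  qed
  have "(k^3 * n^12 * m^3 * x^3 + k^9 * n^6) / (n^16 * m^9 * x^9 + k^16 * m * x)
     \<le> k^3 * n^12 * m^3 * x^3 / (k^16 * m * x) + k^9 * n^6 / (k^16 * m * x)"
    using k m n x by (intro frac_split) auto
  also have "\<dots> \<le> n^12 * x^2 * n^2 * (8192 / n^13) + n^6 / (m * x) * (128 / n^7)"
    unfolding e1 e2 using k n x m p13 p7 p2
    by (intro add_mono mult_mono mult_left_mono) auto
  also have "\<dots> = 8192 * n * x^2 + 128 / (n * m * x)"
    using n x k m by (simp add: field_simps; algebra?)
  finally show ?thesis .
qed



lemma powle1: "(0::real) \<le> u \<Longrightarrow> u \<le> 1 \<Longrightarrow> j \<ge> 1 \<Longrightarrow> u^j \<le> u"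
  by (metis One_nat_def le_numeral_extra(4) power_decreasing power_one_right)

lemma invpowle1: "(1::real) \<le> u \<Longrightarrow> 1 / u^j \<le> 1"
  by (simp add: one_le_power)

lemma T1:
  fixes n x :: real
  assumes n: "n \<ge> 1" and x: "x > 0"
  shows "(n^8 * x^2 + n^2) / (n^15 * x^7 + n^3 * x^3) \<le> 2 / (n^4 * x^4)"
    and "n^3 * x \<le> 1 \<Longrightarrow> (n^8 * x^2 + n^2) / (n^15 * x^7 + n^3 * x^3) \<le> 2 / (n * x^3)"
proof -
  define P where "P = 1 / (n^4 * x^4)"
  define u where "u = n^3 * x"
  have P: "P > 0" and u: "u > 0" using n x by (auto simp: P_def u_def)
  have e1: "n^8 * x^2 / (n^15 * x^7) = P * (1 / u)" "n^2 / (n^15 * x^7) = P * (1 / u^3)"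
     "n^8 * x^2 / (n^3 * x^3) = P * u^3" "n^2 / (n^3 * x^3) = P * u"
    using n x by (simp_all add: P_def u_def field_simps; algebra?)+
  have F: "(n^8 * x^2 + n^2) / (n^15 * x^7 + n^3 * x^3) \<le> P * (1 / u) + P * (1 / u^3)"
          "(n^8 * x^2 + n^2) / (n^15 * x^7 + n^3 * x^3) \<le> P * u^3 + P * u"
    using frac_split[of "n^8 * x^2" "n^2" "n^15 * x^7" "n^3 * x^3"] n x
    unfolding e1 by auto
  show "(n^8 * x^2 + n^2) / (n^15 * x^7 + n^3 * x^3) \<le> 2 / (n^4 * x^4)"
  proof (cases "u \<ge> 1")
    case True
    have "P * (1 / u) \<le> P * 1" "P * (1 / u^3) \<le> P * 1"
      using True P invpowle1[of u 1] invpowle1[of u 3] by (intro mult_left_mono; simp)+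
    then show ?thesis using F(1) by (simp add: P_def)
  next
    case False
    have "P * u^3 \<le> P * 1" "P * u \<le> P * 1"
      using False P u powle1[of u 3] by (intro mult_left_mono; simp)+
    then show ?thesis using F(2) by (simp add: P_def)
  qed
  assume "n^3 * x \<le> 1"
  then have u1: "u \<le> 1" by (simp add: u_def)
  have "P * u^3 \<le> P * u" using u1 P u powle1[of u 3] by (intro mult_left_mono; simp)
  then have "(n^8 * x^2 + n^2) / (n^15 * x^7 + n^3 * x^3) \<le> 2 * (P * u)" using F(2) by simp
  also have "2 * (P * u) = 2 / (n * x^3)" using n x by (simp add: P_def u_def field_simps; algebra?)
  finally show "(n^8 * x^2 + n^2) / (n^15 * x^7 + n^3 * x^3) \<le> 2 / (n * x^3)" .
qed

lemma T2:
  fixes n x :: real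
  assumes n: "n \<ge> 1" and x: "x > 0"
  shows "(n^13 * x^3 + n^4) / (n^23 * x^9 + n^2 * x^2) \<le> 2 / (n^4 * x^4)"
    and "n^3 * x \<le> 1 \<Longrightarrow> (n^13 * x^3 + n^4) / (n^23 * x^9 + n^2 * x^2) \<le> 2 / (n * x^3)"
proof -
  define P where "P = 1 / (n^4 * x^4)"
  define u where "u = n^3 * x"
  have P: "P > 0" and u: "u > 0" using n x by (auto simp: P_def u_def)
  have e1: "n^13 * x^3 / (n^23 * x^9) = P * (1 / u^2)" "n^4 / (n^23 * x^9) = P * (1 / u^5)"
     "n^13 * x^3 / (n^2 * x^2) = P * u^5" "n^4 / (n^2 * x^2) = P * u^2"
    using n x by (simp_all add: P_def u_def field_simps; algebra?)+
  have F: "(n^13 * x^3 + n^4) / (n^23 * x^9 + n^2 * x^2) \<le> P * (1 / u^2) + P * (1 / u^5)"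
          "(n^13 * x^3 + n^4) / (n^23 * x^9 + n^2 * x^2) \<le> P * u^5 + P * u^2"
    using frac_split[of "n^13 * x^3" "n^4" "n^23 * x^9" "n^2 * x^2"] n x
    unfolding e1 by auto
  show "(n^13 * x^3 + n^4) / (n^23 * x^9 + n^2 * x^2) \<le> 2 / (n^4 * x^4)"
  proof (cases "u \<ge> 1")
    case True
    have "P * (1 / u^2) \<le> P * 1" "P * (1 / u^5) \<le> P * 1"
      using True P invpowle1[of u 2] invpowle1[of u 5] by (intro mult_left_mono; simp)+
    then show ?thesis using F(1) by (simp add: P_def)
  next
    case False
    have "P * u^5 \<le> P * 1" "P * u^2 \<le> P * 1"
      using False P u powle1[of u 5] powle1[of u 2] by (intro mult_left_mono; simp)+
    then show ?thesis using F(2) by (simp add: P_def)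
  qed
  assume "n^3 * x \<le> 1"
  then have u1: "u \<le> 1" by (simp add: u_def)
  have "P * u^5 \<le> P * u" "P * u^2 \<le> P * u"
    using u1 P u powle1[of u 5] powle1[of u 2] by (intro mult_left_mono; simp)+
  then have "(n^13 * x^3 + n^4) / (n^23 * x^9 + n^2 * x^2) \<le> 2 * (P * u)" using F(2) by simp
  also have "2 * (P * u) = 2 / (n * x^3)" using n x by (simp add: P_def u_def field_simps; algebra?)
  finally show "(n^13 * x^3 + n^4) / (n^23 * x^9 + n^2 * x^2) \<le> 2 / (n * x^3)" .
qed



definition summ :: "nat \<Rightarrow> real \<Rightarrow> nat \<Rightarrow> real" where
  "summ N x k = (real k ^ 3 * real N ^ 12 * (real N - real k) ^ 3 * x ^ 3 + real k ^ 9 * real N ^ 6)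
      / (real N ^ 16 * (real N - real k) ^ 9 * x ^ 9 + real k ^ 16 * (real N - real k) * x)"

lemma R3:
  assumes x: "x > 0" and N: "N \<ge> 1"
  shows "(\<Sum>k\<in>{3..N-1} - {k. 2*k \<le> N}. summ N x k)
     \<le> 8192 * real N ^ 2 * x^2 + 128 * (1 + ln (real N)) / (real N * x)"
proof -
  let ?J = "{3..N-1} - {k. 2*k \<le> N}"
  have "(\<Sum>k\<in>?J. summ N x k) \<le> (\<Sum>k\<in>?J. 8192 * real N * x^2 + 128 / (real N * x) * (1 / real (N - k)))"
  proof (intro sum_mono)
    fix k assume k: "k \<in> ?J"
    then have kk: "k \<ge> 3" "k < N" "2*k > N" by auto
    have "summ N x k \<le> 8192 * real N * x^2 + 128 / (real N * (real N - real k) * x)"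
      unfolding summ_def using kk x by (intro sC) auto
    also have "\<dots> = 8192 * real N * x^2 + 128 / (real N * x) * (1 / real (N - k))"
      using kk by (simp add: of_nat_diff)
    finally show "summ N x k \<le> \<dots>" .
  qed
  also have "\<dots> = (\<Sum>k\<in>?J. 8192 * real N * x^2) + 128 / (real N * x) * (\<Sum>k\<in>?J. 1 / real (N - k))"
    by (simp add: sum.distrib sum_distrib_left)
  also have "(\<Sum>k\<in>?J. 8192 * real N * x^2) \<le> real N * (8192 * real N * x^2)"
  proof -
    have "card ?J \<le> card {3..N-1}" by (intro card_mono) auto
    also have "\<dots> \<le> N" by simp
    finally have "real (card ?J) \<le> real N" by simp
    then show ?thesis using x by (simp add: mult_right_mono)
  qed
  also have "(\<Sum>k\<in>?J. 1 / real (N - k)) \<le> 1 + ln (real N)"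
  proof -
    have inj: "inj_on (\<lambda>k. N - k) ?J" by (intro inj_onI) auto
    have "(\<Sum>k\<in>?J. 1 / real (N - k)) = (\<Sum>j\<in>(\<lambda>k. N - k) ` ?J. 1 / real j)"
      using sum.reindex[OF inj, of "\<lambda>j. 1 / real j"] by simp
    also have "\<dots> \<le> (\<Sum>j\<in>{1..N}. 1 / real j)"
      by (intro sum_mono2) auto
    also have "\<dots> \<le> 1 + ln (real N)" using harm_le N by simp
    finally show ?thesis .
  qed
  then have "128 / (real N * x) * (\<Sum>k\<in>?J. 1 / real (N - k)) \<le> 128 / (real N * x) * (1 + ln (real N))"
    using x by (intro mult_left_mono) auto
  finally show ?thesis by (simp add: power2_eq_square algebra_simps)
qed

lemma R12b:
  assumes x: "x > 0"
  shows "(\<Sum>k\<in>{3..N-1} \<inter> {k. 2*k \<le> N}. summ N x k) \<le> real N ^ 14 * x^2 + 2 * real N ^ 5 / x"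
proof -
  let ?J = "{3..N-1} \<inter> {k. 2*k \<le> N}"
  have "(\<Sum>k\<in>?J. summ N x k) \<le> (\<Sum>k\<in>?J. (real N ^ 14 * x^2 + 2 * real N ^ 5 / x) * (1 / real k ^ 2))"
  proof (intro sum_mono)
    fix k assume k: "k \<in> ?J"
    then have kk: "k \<ge> 3" "2*k \<le> N" by auto
    have k1: "real k \<ge> 1" using kk by simp
    have "summ N x k \<le> real N ^ 14 * x^2 / real k ^ 13 + 2 * real N ^ 5 / (real k ^ 7 * x)"
      unfolding summ_def using kk x by (intro sB) auto
    also have "\<dots> \<le> real N ^ 14 * x^2 * (1 / real k ^ 2) + 2 * real N ^ 5 / x * (1 / real k ^ 2)"
    proof (intro add_mono)
      have "real k ^ 2 \<le> real k ^ 13" using k1 by (intro power_increasing) auto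
      then have "1 / real k ^ 13 \<le> 1 / real k ^ 2" using k1 by (intro divide_left_mono) auto
      then show "real N ^ 14 * x^2 / real k ^ 13 \<le> real N ^ 14 * x^2 * (1 / real k ^ 2)"
        using mult_left_mono[of "1 / real k ^ 13" "1 / real k ^ 2" "real N ^ 14 * x^2"] by simp
      have "real k ^ 2 \<le> real k ^ 7" using k1 by (intro power_increasing) auto
      then have "1 / real k ^ 7 \<le> 1 / real k ^ 2" using k1 by (intro divide_left_mono) auto
      then show "2 * real N ^ 5 / (real k ^ 7 * x) \<le> 2 * real N ^ 5 / x * (1 / real k ^ 2)"
        using mult_left_mono[of "1 / real k ^ 7" "1 / real k ^ 2" "2 * real N ^ 5 / x"] x by (simp add: mult.commute)
    qed
    finally show "summ N x k \<le> (real N ^ 14 * x^2 + 2 * real N ^ 5 / x) * (1 / real k ^ 2)"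
      by (simp add: algebra_simps)
  qed
  also have "\<dots> = (real N ^ 14 * x^2 + 2 * real N ^ 5 / x) * (\<Sum>k\<in>?J. 1 / real k ^ 2)"
    by (simp add: sum_distrib_left)
  also have "\<dots> \<le> (real N ^ 14 * x^2 + 2 * real N ^ 5 / x) * 1"
  proof (intro mult_left_mono)
    have "(\<Sum>k\<in>?J. 1 / real k ^ 2) \<le> (\<Sum>k\<in>{3..N}. 1 / real k ^ 2)" by (intro sum_mono2) auto
    also have "\<dots> \<le> 2 / real (3::nat)" by (intro tail) auto
    finally show "(\<Sum>k\<in>?J. 1 / real k ^ 2) \<le> 1" by simp
  qed (use x in auto)
  finally show ?thesis by simp
qed



lemma R12a:
  assumes x: "x > 0" and N: "N \<ge> 1"
  shows "(\<Sum>k\<in>{3..N-1} \<inter> {k. 2*k \<le> N}. summ N x k) \<le> 582 / (real N ^ 4 * x ^ 4)"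
proof -
  let ?J = "{3..N-1} \<inter> {k. 2*k \<le> N}"
  define K where "K = sqrt (real N ^ 3 * x)"
  have Kpos: "K > 0" using x N by (simp add: K_def)
  have K2: "K^2 = real N ^ 3 * x" using x unfolding K_def by simp
  have Npos: "real N > 0" using N by simp
  let ?J1 = "?J \<inter> {k. real k \<le> K}" and ?J2 = "?J - {k. real k \<le> K}"
  have split: "(\<Sum>k\<in>?J. summ N x k) = (\<Sum>k\<in>?J1. summ N x k) + (\<Sum>k\<in>?J2. summ N x k)"
    by (rule sum.Int_Diff) simp
  define c where "c = 64 * K^3 / (real N ^ 10 * x^6) + 512 * K^9 / (real N ^ 19 * x^9)"
  have c0: "c \<ge> 0" using Kpos x by (simp add: c_def)
  have S1: "(\<Sum>k\<in>?J1. summ N x k) \<le> K * c"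
  proof -
    have "(\<Sum>k\<in>?J1. summ N x k) \<le> (\<Sum>k\<in>?J1. c)"
    proof (intro sum_mono)
      fix k assume k: "k \<in> ?J1"
      then have kk: "k \<ge> 3" "2*k \<le> N" "real k \<le> K" by auto
      have "summ N x k \<le> 64 * real k ^ 3 / (real N ^ 10 * x ^ 6) + 512 * real k ^ 9 / (real N ^ 19 * x ^ 9)"
        unfolding summ_def using kk x by (intro sA) auto
      also have "\<dots> \<le> c" unfolding c_def using kk x Npos
        by (intro add_mono divide_right_mono mult_left_mono power_mono) auto
      finally show "summ N x k \<le> c" .
    qed
    also have "\<dots> = real (card ?J1) * c" by simp
    also have "\<dots> \<le> K * c"
    proof (intro mult_right_mono c0)
      have "?J1 \<subseteq> {1..nat \<lfloor>K\<rfloor>}"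
      proof
        fix k assume "k \<in> ?J1"
        then have "k \<ge> 3" "real k \<le> K" by auto
        then show "k \<in> {1..nat \<lfloor>K\<rfloor>}" by (simp add: le_nat_floor)
      qed
      then have "card ?J1 \<le> nat \<lfloor>K\<rfloor>" using card_mono[of "{1..nat \<lfloor>K\<rfloor>}"] by fastforce
      then have "real (card ?J1) \<le> real (nat \<lfloor>K\<rfloor>)" by simp
      also have "\<dots> \<le> K" using Kpos by linarith
      finally show "real (card ?J1) \<le> K" .
    qed
    finally show ?thesis .
  qed
  have Kc: "K * c = 576 / (real N ^ 4 * x ^ 4)"
  proof -
    have "K * c = 64 * (K^2)^2 / (real N ^ 10 * x^6) + 512 * (K^2)^5 / (real N ^ 19 * x^9)"
      unfolding c_def by (simp add: field_simps; algebra?)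
    also have "\<dots> = 576 / (real N ^ 4 * x ^ 4)" unfolding K2 using x Npos
      by (simp add: field_simps; algebra?)
    finally show ?thesis .
  qed
  define d where "d = real N ^ 14 * x^2 / K^11 + 2 * real N ^ 5 / (x * K^5)"
  have S2: "(\<Sum>k\<in>?J2. summ N x k) \<le> d * (2 / K)"
  proof -
    have "(\<Sum>k\<in>?J2. summ N x k) \<le> (\<Sum>k\<in>?J2. d * (1 / real k ^ 2))"
    proof (intro sum_mono)
      fix k assume k: "k \<in> ?J2"
      then have kk: "k \<ge> 3" "2*k \<le> N" "real k > K" by auto
      have "summ N x k \<le> real N ^ 14 * x^2 / real k ^ 13 + 2 * real N ^ 5 / (real k ^ 7 * x)"
        unfolding summ_def using kk x by (intro sB) auto
      also have "\<dots> \<le> real N ^ 14 * x^2 / (K^11 * real k ^ 2) + 2 * real N ^ 5 / ((K^5 * real k ^ 2) * x)"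
      proof (intro add_mono divide_left_mono mult_right_mono)
        have "K^11 * real k ^ 2 \<le> real k ^ 11 * real k ^ 2"
          using kk Kpos by (intro mult_right_mono power_mono) auto
        then show "K^11 * real k ^ 2 \<le> real k ^ 13" by (simp add: power_add[symmetric])
        have "K^5 * real k ^ 2 \<le> real k ^ 5 * real k ^ 2"
          using kk Kpos by (intro mult_right_mono power_mono) auto
        then show "K^5 * real k ^ 2 \<le> real k ^ 7" by (simp add: power_add[symmetric])
      qed (use x Kpos kk in auto)
      also have "\<dots> = d * (1 / real k ^ 2)" unfolding d_def using x Kpos kk
        by (simp add: field_simps)
      finally show "summ N x k \<le> d * (1 / real k ^ 2)" .
    qed
    also have "\<dots> = d * (\<Sum>k\<in>?J2. 1 / real k ^ 2)" by (simp add: sum_distrib_left)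
    also have "\<dots> \<le> d * (2 / K)"
    proof (intro mult_left_mono)
      define a where "a = nat \<lfloor>K\<rfloor> + 1"
      have a1: "a \<ge> 1" and aK: "real a > K" unfolding a_def using Kpos by linarith+
      have "?J2 \<subseteq> {a..N}"
      proof
        fix k assume "k \<in> ?J2"
        then have "real k > K" "k \<le> N" by auto
        moreover have "real (nat \<lfloor>K\<rfloor>) \<le> K" using Kpos by linarith
        ultimately have "real (nat \<lfloor>K\<rfloor>) < real k" by linarith
        then have "nat \<lfloor>K\<rfloor> < k" by (simp only: of_nat_less_iff)
        then show "k \<in> {a..N}" unfolding a_def using \<open>k \<le> N\<close> by simp
      qed
      then have "(\<Sum>k\<in>?J2. 1 / real k ^ 2) \<le> (\<Sum>k\<in>{a..N}. 1 / real k ^ 2)"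
        by (intro sum_mono2) auto
      also have "\<dots> \<le> 2 / real a" by (rule tail[OF a1])
      also have "\<dots> \<le> 2 / K" using aK Kpos by (intro divide_left_mono) auto
      finally show "(\<Sum>k\<in>?J2. 1 / real k ^ 2) \<le> 2 / K" .
    qed (use x Kpos in \<open>simp add: d_def\<close>)
    finally show ?thesis .
  qed
  have dK: "d * (2 / K) = 6 / (real N ^ 4 * x ^ 4)"
  proof -
    have "d * (2 / K) = 2 * real N ^ 14 * x^2 / (K^2)^6 + 4 * real N ^ 5 / (x * (K^2)^3)"
      unfolding d_def using Kpos x by (simp add: field_simps; algebra?)
    also have "\<dots> = 6 / (real N ^ 4 * x ^ 4)" unfolding K2 using x Npos
      by (simp add: field_simps; algebra?)
    finally show ?thesis .
  qed
  show ?thesis using split S1 S2 Kc dK by simp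
qed



lemma lhs_eq: "lhs17 f n = (real n ^ 8 * f n ^ 2 + real n ^ 2) / (real n ^ 15 * f n ^ 7 + real n ^ 3 * f n ^ 3)
   + (real n ^ 13 * f n ^ 3 + real n ^ 4) / (real n ^ 23 * f n ^ 9 + real n ^ 2 * f n ^ 2)
   + (\<Sum>k\<in>{3..n-1} \<inter> {k. 2*k \<le> n}. summ n (f n) k) + (\<Sum>k\<in>{3..n-1} - {k. 2*k \<le> n}. summ n (f n) k)"
proof -
  have e1: "(\<Sum>k\<in>{3..n-1}. summ n (f n) k) = (\<Sum>k\<in>{3..n-1} \<inter> {k. 2*k \<le> n}. summ n (f n) k) + (\<Sum>k\<in>{3..n-1} - {k. 2*k \<le> n}. summ n (f n) k)"
    by (rule sum.Int_Diff) (rule finite_atLeastAtMost)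
  have e2: "lhs17 f n = (real n ^ 8 * f n ^ 2 + real n ^ 2) / (real n ^ 15 * f n ^ 7 + real n ^ 3 * f n ^ 3)
   + (real n ^ 13 * f n ^ 3 + real n ^ 4) / (real n ^ 23 * f n ^ 9 + real n ^ 2 * f n ^ 2)
   + (\<Sum>k\<in>{3..n-1}. summ n (f n) k)"
    unfolding lhs17_def summ_def by (rule refl)
  show ?thesis unfolding e2 e1 by (simp only: add.assoc)
qed

lemma lhs_nonneg: assumes f: "f n > 0" shows "lhs17 f n \<ge> 0"
  unfolding lhs17_def
proof (intro add_nonneg_nonneg sum_nonneg divide_nonneg_nonneg mult_nonneg_nonneg zero_le_power)
  fix k assume "k \<in> {3..n-1}"
  then show "0 \<le> real n - real k" by auto
qed (use f in auto)

lemma ln3: "ln (3::real) \<ge> 1"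
proof -
  have "exp 1 \<le> (3::real)" using exp_le by simp
  then have "ln (exp 1) \<le> ln (3::real)" by (subst ln_le_cancel_iff) auto
  then show ?thesis by simp
qed

lemma pt1:
  assumes n: "n \<ge> 3" and x: "f n > 0" and C: "C \<ge> 1" and g: "real n * f n \<le> C"
  shows "lhs17 f n \<le> (586 + 8192 * C^6 + 256) * (ln (real n) / (real n * f n) + 1 / (real n ^ 4 * f n ^ 4))"
proof -
  define x where "x = f n"
  have x0: "x > 0" using x by (simp add: x_def)
  have n1: "real n \<ge> 1" "n \<ge> 1" using n by auto
  define P where "P = 1 / (real n ^ 4 * x ^ 4)"
  define L where "L = ln (real n) / (real n * x)"
  have P0: "P \<ge> 0" and L0: "L \<ge> 0" using x0 n1 by (auto simp: P_def L_def)
  have main: "lhs17 f n \<le> 2 * P + 2 * P + 582 * P + (8192 * real n ^ 2 * x^2 + 128 * (1 + ln (real n)) / (real n * x))"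
    unfolding lhs_eq x_def[symmetric] P_def
    using T1(1)[OF n1(1) x0] T2(1)[OF n1(1) x0] R12a[OF x0 n1(2)] R3[OF x0 n1(2)] by linarith
  have b1: "real n ^ 2 * x^2 \<le> C^6 * P"
  proof -
    have g0: "real n * x > 0" using x0 n1 by simp
    have "(real n * x)^6 \<le> C^6" using g g0 by (intro power_mono) (auto simp: x_def)
    then have "(real n * x)^2 * (real n * x)^4 \<le> C^6" by (simp add: power_add[symmetric])
    then have "(real n * x)^2 \<le> C^6 / (real n * x)^4" using g0
      using n1 by (subst pos_le_divide_eq) (auto simp: zero_less_power)
    then show ?thesis by (simp add: P_def power_mult_distrib)
  qed
  have b2: "128 * (1 + ln (real n)) / (real n * x) \<le> 256 * L"
  proof -
    have "ln 3 \<le> ln (real n)" using n by simp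
    then have "1 + ln (real n) \<le> 2 * ln (real n)" using ln3 by linarith
    then show ?thesis unfolding L_def using x0 n1 by (simp add: divide_right_mono)
  qed
  have "lhs17 f n \<le> (586 + 8192 * C^6) * P + 256 * L" using main b1 b2 by (simp add: algebra_simps)
  also have "\<dots> \<le> (586 + 8192 * C^6 + 256) * (L + P)" using P0 L0 C
    by (simp add: algebra_simps)
  finally show ?thesis by (simp add: L_def P_def x_def)
qed

lemma pt2:
  assumes n: "n \<ge> 3" and x: "f n > 0" and u: "real n ^ 3 * f n \<le> 1"
  shows "lhs17 f n \<le> 8327 * (1 / (real n * f n ^ 3))"
proof -
  define x where "x = f n"
  have x0: "x > 0" using x by (simp add: x_def)
  have n1: "real n \<ge> 1" "n \<ge> 1" using n by auto
  have u1: "real n ^ 3 * x \<le> 1" using u by (simp add: x_def)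
  define Q where "Q = 1 / (real n * x ^ 3)"
  define v where "v = real n ^ 3 * x"
  have v0: "v > 0" "v \<le> 1" using x0 n1 u1 by (auto simp: v_def)
  have Q0: "Q > 0" using x0 n1 by (simp add: Q_def)
  have x1: "x \<le> 1"
  proof -
    have "1 * x \<le> real n ^ 3 * x" using n1 x0 by (intro mult_right_mono) auto
    then show ?thesis using u1 by simp
  qed
  have main: "lhs17 f n \<le> 2 * Q + 2 * Q + (real n ^ 14 * x^2 + 2 * real n ^ 5 / x) + (8192 * real n ^ 2 * x^2 + 128 * (1 + ln (real n)) / (real n * x))"
    unfolding lhs_eq x_def[symmetric] Q_def
    using T1(2)[OF n1(1) x0 u1] T2(2)[OF n1(1) x0 u1] R12b[OF x0, of n] R3[OF x0 n1(2)] by linarith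
  have c1: "real n ^ 14 * x^2 \<le> Q"
  proof -
    have "real n ^ 14 * x^2 = Q * v^5" unfolding Q_def v_def using x0 n1
      by (simp add: field_simps; algebra?)
    also have "\<dots> \<le> Q * 1" using v0 Q0 by (intro mult_left_mono) (auto simp: power_le_one)
    finally show ?thesis by simp
  qed
  have c2: "2 * real n ^ 5 / x \<le> 2 * Q"
  proof -
    have "2 * real n ^ 5 / x = 2 * Q * v^2" unfolding Q_def v_def using x0 n1
      by (simp add: field_simps; algebra?)
    also have "\<dots> \<le> 2 * Q * 1" using v0 Q0 by (intro mult_left_mono) (auto simp: power_le_one)
    finally show ?thesis by simp
  qed
  have c3: "real n ^ 2 * x^2 \<le> Q"
  proof -
    have "real n ^ 2 * x^2 = Q * (v * x^4)" unfolding Q_def v_def using x0 n1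
      by (simp add: field_simps; algebra?)
    also have "\<dots> \<le> Q * 1" using v0 Q0 x0 x1
      by (intro mult_left_mono) (auto simp: power_le_one mult_le_one)
    finally show ?thesis by simp
  qed
  have c4: "128 * (1 + ln (real n)) / (real n * x) \<le> 128 * Q"
  proof -
    have "1 + ln (real n) \<le> real n" using ln_le_minus_one[of "real n"] n1 by simp
    have e: "(1 + ln (real n)) / (real n * x) = Q * ((1 + ln (real n)) * x^2)" unfolding Q_def using x0 n1
      by (simp add: field_simps; algebra?)
    have d1: "(1 + ln (real n)) * x^2 \<le> real n * x^2"
      using \<open>1 + ln (real n) \<le> real n\<close> by (intro mult_right_mono) auto
    have d2: "real n * x^2 \<le> real n * x" using x0 x1 n1 by (intro mult_left_mono) (auto simp: power2_eq_square)
    have "real n * x \<le> real n ^ 3 * x" using n1 x0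
      by (intro mult_right_mono) (auto simp: self_le_power)
    then have d3: "real n * x \<le> 1" using u1 by simp
    have "Q * ((1 + ln (real n)) * x^2) \<le> Q * 1"
      using Q0 d1 d2 d3 by (intro mult_left_mono) auto
    moreover have "128 * (1 + ln (real n)) / (real n * x) = 128 * ((1 + ln (real n)) / (real n * x))"
      by (rule times_divide_eq_right[symmetric])
    ultimately show ?thesis using e by linarith
  qed
  have "lhs17 f n \<le> 8327 * Q" using main c1 c2 c3 c4 by linarith
  then show ?thesis by (simp add: Q_def x_def)
qed



theorem lemma17:
  fixes f :: "nat \<Rightarrow> real"
  assumes pos: "\<And>n. f n > 0"
    and fO: "f \<in> O[at_top](\<lambda>n. 1 / real n)"
  shows "lhs17 f \<in> O[at_top](\<lambda>n. ln (real n) / (real n * f n) + 1 / (real n ^ 4 * f n ^ 4))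
         \<and> (f \<in> o[at_top](\<lambda>n. 1 / real n ^ 3) \<longrightarrow>
            lhs17 f \<in> O[at_top](\<lambda>n. 1 / (real n * f n ^ 3)))"
proof
  from fO obtain c where c: "c > 0" "eventually (\<lambda>n. norm (f n) \<le> c * norm (1 / real n)) at_top"
    by (elim landau_o.bigE)
  define C where "C = max c 1"
  have C1: "C \<ge> 1" by (simp add: C_def)
  have ev: "eventually (\<lambda>n. n \<ge> 3 \<and> real n * f n \<le> C) at_top"
    using c(2) eventually_ge_at_top[of "3::nat"]
  proof eventually_elim
    case (elim n)
    then have "f n \<le> c / real n" using pos[of n] by simp
    then have "real n * f n \<le> c" using elim(2) by (simp add: field_simps)
    then show ?case using elim(2) by (simp add: C_def)
  qed
  show "lhs17 f \<in> O[at_top](\<lambda>n. ln (real n) / (real n * f n) + 1 / (real n ^ 4 * f n ^ 4))"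
  proof (rule bigoI[where c = "586 + 8192 * C^6 + 256"])
    show "eventually (\<lambda>n. norm (lhs17 f n) \<le> (586 + 8192 * C^6 + 256) *
        norm (ln (real n) / (real n * f n) + 1 / (real n ^ 4 * f n ^ 4))) at_top"
      using ev
    proof eventually_elim
      case (elim n)
      have T0: "ln (real n) / (real n * f n) + 1 / (real n ^ 4 * f n ^ 4) \<ge> 0"
        using pos[of n] elim by (intro add_nonneg_nonneg divide_nonneg_nonneg) auto
      show ?case using pt1[of n f C] elim pos[of n] C1 lhs_nonneg[of f n] T0 by simp
    qed
  qed
  show "f \<in> o[at_top](\<lambda>n. 1 / real n ^ 3) \<longrightarrow> lhs17 f \<in> O[at_top](\<lambda>n. 1 / (real n * f n ^ 3))"
  proof
    assume fo: "f \<in> o[at_top](\<lambda>n. 1 / real n ^ 3)"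
    have ev2: "eventually (\<lambda>n. norm (f n) \<le> 1 * norm (1 / real n ^ 3)) at_top"
      by (rule landau_o.smallD[OF fo]) simp
    show "lhs17 f \<in> O[at_top](\<lambda>n. 1 / (real n * f n ^ 3))"
    proof (rule bigoI[where c = 8327])
      show "eventually (\<lambda>n. norm (lhs17 f n) \<le> 8327 * norm (1 / (real n * f n ^ 3))) at_top"
        using ev2 eventually_ge_at_top[of "3::nat"]
      proof eventually_elim
        case (elim n)
        then have "f n \<le> 1 / real n ^ 3" using pos[of n] by simp
        then have u: "real n ^ 3 * f n \<le> 1" using elim(2) by (simp add: field_simps)
        have T0: "1 / (real n * f n ^ 3) \<ge> 0" using pos[of n] by simp
        show ?case using pt2[of n f, OF elim(2) pos[of n] u] lhs_nonneg[of f n] pos[of n] T0 by simp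
      qed
    qed
  qed
qed

end
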